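(* Let $p>0$ and $q\in\mathbb{R}$. Then any two elements of $\mathcal{A}_{p,q}^{+} = \{A\in S(4,\mathbb{R}) : A\neq\pm\sqrt{p}\,J,\ \operatorname{Pf}(A) = p,\ \operatorname{s}(A) = q\}$ are equivalent under the action $\rho$, i.e. for any $A,B\in\mathcal{A}_{p,q}^{+}$ there is $P\in\operatorname{Sp}(4)$ with $B = P^TAP$.
   Context: $S(4,\mathbb{R})$ is the set of invertible skew-symmetric real $4\times4$ matrices; $J = \operatorname{diag}(J_0,J_0)$ with $J_0 = \begin{bmatrix} 0 & 1 \\ -1 & 0\end{bmatrix}$; $\operatorname{Sp}(4) = \{P : P^TJP = J\}$; $\rho(P,A) = P^TAP$. For $A = \begin{bmatrix} 0 & a & b & c \\ -a & 0 & d & e \\ -b & -d & 0 & f \\ -c & -e & -f & 0\end{bmatrix}$, $\operatorname{Pf}(A) = af-be+cd$ and $\operatorname{s}(A) = a+f$. *)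

theory Defs
  imports "HOL-Analysis.Analysis"
begin

type_synonym mat4 = "real ^ 4 ^ 4"

definition skew :: "mat4 \<Rightarrow> bool" where
  "skew A \<longleftrightarrow> transpose A = - A"

definition S4 :: "mat4 set" where
  "S4 = {A. skew A \<and> invertible A}"

definition J :: mat4 where
  "J = (\<chi> i j. if (i = 1 \<and> j = 2) \<or> (i = 3 \<and> j = 4) then 1
               else if (i = 2 \<and> j = 1) \<or> (i = 4 \<and> j = 3) then -1 else 0)"

definition Sp4 :: "mat4 set" where
  "Sp4 = {P. transpose P ** J ** P = J}"

definition rho :: "mat4 \<Rightarrow> mat4 \<Rightarrow> mat4" where
  "rho P A = transpose P ** A ** P"

definition Pf :: "mat4 \<Rightarrow> real" where
  "Pf A = A$1$2 * A$3$4 - A$1$3 * A$2$4 + A$1$4 * A$2$3"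

definition s :: "mat4 \<Rightarrow> real" where
  "s A = A$1$2 + A$3$4"

definition Apq_plus :: "real \<Rightarrow> real \<Rightarrow> mat4 set" where
  "Apq_plus p q = {A \<in> S4. A \<noteq> sqrt p *\<^sub>R J \<and> A \<noteq> - (sqrt p *\<^sub>R J) \<and> Pf A = p \<and> s A = q}"

end

theory Submission
  imports Defs
begin
lemma Jent: "J$1$1 = 0" "J$1$2 = 1" "J$1$3 = 0" "J$1$4 = 0"
 "J$2$1 = -1" "J$2$2 = 0" "J$2$3 = 0" "J$2$4 = 0"
 "J$3$1 = 0" "J$3$2 = 0" "J$3$3 = 0" "J$3$4 = 1"
 "J$4$1 = 0" "J$4$2 = 0" "J$4$3 = -1" "J$4$4 = 0"
  by (simp_all add: J_def)
definition Mof :: "mat4 \<Rightarrow> mat4" where "Mof A = -(J ** A)"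
lemma skewE: assumes "skew A" shows "A$i$j = - A$j$i"
proof -
  have "(transpose A)$j$i = (-A)$j$i" using assms unfolding skew_def by simp
  then show ?thesis by (simp add: transpose_def)
qed
lemma skew_facts: assumes "skew A"
  shows "A$1$1 = 0" "A$2$2 = 0" "A$3$3 = 0" "A$4$4 = 0"
    "A$2$1 = - A$1$2" "A$3$1 = - A$1$3" "A$4$1 = - A$1$4" "A$3$2 = - A$2$3" "A$4$2 = - A$2$4" "A$4$3 = - A$3$4"
  using skewE[OF assms, of 1 1] skewE[OF assms, of 2 2] skewE[OF assms, of 3 3] skewE[OF assms, of 4 4]
    skewE[OF assms, of 2 1] skewE[OF assms, of 3 1] skewE[OF assms, of 4 1] skewE[OF assms, of 3 2] skewE[OF assms, of 4 2] skewE[OF assms, of 4 3] by auto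
lemma mat4_eq: "(X::mat4) = Y \<longleftrightarrow> (\<forall>i j. X$i$j = Y$i$j)" by (simp add: vec_eq_iff)
lemma JM: "J ** Mof A = A"
  by (simp add: mat4_eq forall_4 matrix_matrix_mult_def sum_4 Jent Mof_def)
lemma MMv: assumes "skew A" shows "Mof A *v (Mof A *v y) = s A *\<^sub>R (Mof A *v y) - Pf A *\<^sub>R y"
  using skew_facts[OF assms]
  by (simp add: vec_eq_iff forall_4 matrix_matrix_mult_def matrix_vector_mult_def sum_4 Jent Mof_def s_def Pf_def algebra_simps)

lemma J_skew: "(x::real^4) \<bullet> (J *v y) = - (y \<bullet> (J *v x))"
  by (simp add: inner_vec_def matrix_vector_mult_def sum_4 Jent algebra_simps)
lemma A_skew: assumes "skew A" shows "(x::real^4) \<bullet> (A *v y) = - (y \<bullet> (A *v x))"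
  using skew_facts[OF assms]
  by (simp add: inner_vec_def matrix_vector_mult_def sum_4 algebra_simps)
lemma JMv: "(x::real^4) \<bullet> (J *v (Mof A *v y)) = x \<bullet> (A *v y)"
  by (simp add: matrix_vector_mul_assoc JM)

lemma congr_entry: "(transpose (\<chi> i j. u j $ i) ** X ** (\<chi> i j. u j $ i)) $ i $ j = (u i :: real^4) \<bullet> (X *v u j)"
  by (simp add: matrix_matrix_mult_def transpose_def matrix_vector_mult_def inner_vec_def sum_4 algebra_simps)

lemma mvneg: "(X::mat4) *v (- x) = - (X *v x)"
  by (simp add: vec_eq_iff matrix_vector_mult_def sum_negf)

definition N :: "real \<Rightarrow> real \<Rightarrow> mat4" where
  "N p q = (\<chi> i j. if i=1 \<and> j=4 then 1 else if i=4 \<and> j=1 then -1 else if i=2 \<and> j=3 then p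
     else if i=3 \<and> j=2 then -p else if i=3 \<and> j=4 then q else if i=4 \<and> j=3 then -q else 0)"

definition cols :: "(real^4) \<Rightarrow> (real^4) \<Rightarrow> (real^4) \<Rightarrow> (real^4) \<Rightarrow> mat4" where
  "cols x1 x2 x3 x4 = (\<chi> i j. (if j = 1 then x1 else if j = 2 then x2 else if j = 3 then x3 else x4) $ i)"

lemma cols_entry: "(transpose (cols x1 x2 x3 x4) ** X ** (cols x1 x2 x3 x4)) $ i $ j =
   (if i = 1 then x1 else if i = 2 then x2 else if i = 3 then x3 else x4) \<bullet> (X *v (if j = 1 then x1 else if j = 2 then x2 else if j = 3 then x3 else x4))"
  unfolding cols_def by (rule congr_entry)

lemma normal:
  assumes sk: "skew A" and p: "Pf A \<noteq> 0"
    and vw: "v \<bullet> (J *v w) = 1" and mvw: "(Mof A *v v) \<bullet> (J *v w) = 0"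
  shows "cols v w (Mof A *v v) ((- 1 / Pf A) *\<^sub>R (Mof A *v w)) \<in> Sp4"
    "rho (cols v w (Mof A *v v) ((- 1 / Pf A) *\<^sub>R (Mof A *v w))) A = N (Pf A) (s A)"
proof -
  define M where "M = Mof A"
  define mv where "mv = M *v v"
  define mw where "mw = M *v w"
  let ?p = "Pf A" let ?q = "s A"
  have mm: "M *v (M *v y) = ?q *\<^sub>R (M *v y) - ?p *\<^sub>R y" for y unfolding M_def by (rule MMv[OF sk])
  have js: "x \<bullet> (J *v y) = - (y \<bullet> (J *v x))" for x y by (rule J_skew)
  have as: "x \<bullet> (A *v y) = - (y \<bullet> (A *v x))" for x y by (rule A_skew[OF sk])
  have jm: "x \<bullet> (J *v (M *v y)) = x \<bullet> (A *v y)" for x y unfolding M_def by (rule JMv)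
  have jd: "x \<bullet> (J *v x) = 0" for x using js[of x x] by simp
  have ad: "x \<bullet> (A *v x) = 0" for x using as[of x x] by simp
  have f4: "(M *v x) \<bullet> (J *v y) = x \<bullet> (J *v (M *v y))" for x y
    using js[of "M *v x" y] jm[of y x] as[of y x] jm[of x y] by simp
  have J1: "v \<bullet> (J *v w) = 1" by (rule vw)
  have J2: "mv \<bullet> (J *v w) = 0" using mvw unfolding mv_def M_def .
  have J3: "v \<bullet> (J *v mv) = 0" unfolding mv_def using jm ad by simp
  have J4: "w \<bullet> (J *v mw) = 0" unfolding mw_def using jm ad by simp
  have J5: "v \<bullet> (J *v mw) = 0" unfolding mw_def using f4[of v w] J2 mv_def by simp
  have J6: "mv \<bullet> (J *v mw) = - ?p" unfolding mw_def mv_def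
    using f4[of v "M *v w"] mm[of w] J1 J5[unfolded mw_def]
    by (simp add: matrix_vector_mult_diff_distrib matrix_vector_mult_scaleR inner_diff_right)
  have K1: "w \<bullet> (J *v v) = -1" using js[of w v] J1 by simp
  have K2: "w \<bullet> (J *v mv) = 0" using js[of w mv] J2 by simp
  have K3: "mv \<bullet> (J *v v) = 0" using js[of mv v] J3 by simp
  have K4: "mw \<bullet> (J *v w) = 0" using js[of mw w] J4 by simp
  have K5: "mw \<bullet> (J *v v) = 0" using js[of mw v] J5 by simp
  have K6: "mw \<bullet> (J *v mv) = ?p" using js[of mw mv] J6 by simp
  have mmv: "M *v mv = ?q *\<^sub>R mv - ?p *\<^sub>R v" unfolding mv_def by (rule mm)
  have mmw: "M *v mw = ?q *\<^sub>R mw - ?p *\<^sub>R w" unfolding mw_def by (rule mm)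
  have A1: "v \<bullet> (A *v w) = 0" using jm[of v w] J5 mw_def by simp
  have A2: "v \<bullet> (A *v mv) = 0" using jm[of v mv] mmv J1 J3 jd
    by (simp add: matrix_vector_mult_diff_distrib matrix_vector_mult_scaleR inner_diff_right)
  have A3: "v \<bullet> (A *v mw) = - ?p" using jm[of v mw] mmw J1 J5
    by (simp add: matrix_vector_mult_diff_distrib matrix_vector_mult_scaleR inner_diff_right)
  have A4: "w \<bullet> (A *v mv) = ?p" using jm[of w mv] mmv K1 K2
    by (simp add: matrix_vector_mult_diff_distrib matrix_vector_mult_scaleR inner_diff_right)
  have A5: "w \<bullet> (A *v mw) = 0" using jm[of w mw] mmw J4 jd
    by (simp add: matrix_vector_mult_diff_distrib matrix_vector_mult_scaleR inner_diff_right)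
  have A6: "mv \<bullet> (A *v mw) = - ?p * ?q" using jm[of mv mw] mmw J6 J2
    by (simp add: matrix_vector_mult_diff_distrib matrix_vector_mult_scaleR inner_diff_right mult.commute)
  have B1: "w \<bullet> (A *v v) = 0" using as[of w v] A1 by simp
  have B2: "mv \<bullet> (A *v v) = 0" using as[of mv v] A2 by simp
  have B3: "mw \<bullet> (A *v v) = ?p" using as[of mw v] A3 by simp
  have B4: "mv \<bullet> (A *v w) = - ?p" using as[of mv w] A4 by simp
  have B5: "mw \<bullet> (A *v w) = 0" using as[of mw w] A5 by simp
  have B6: "mw \<bullet> (A *v mv) = ?p * ?q" using as[of mw mv] A6 by simp
  show "cols v w (Mof A *v v) ((- 1 / Pf A) *\<^sub>R (Mof A *v w)) \<in> Sp4"
    unfolding M_def[symmetric] mv_def[symmetric] mw_def[symmetric]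
    unfolding Sp4_def mem_Collect_eq mat4_eq cols_entry
    using J1 J2 J3 J4 J5 J6 K1 K2 K3 K4 K5 K6 jd p
    by (simp add: forall_4 Jent matrix_vector_mult_scaleR mvneg)
  show "rho (cols v w (Mof A *v v) ((- 1 / Pf A) *\<^sub>R (Mof A *v w))) A = N (Pf A) (s A)"
    unfolding M_def[symmetric] mv_def[symmetric] mw_def[symmetric]
    unfolding rho_def mat4_eq cols_entry
    using A1 A2 A3 A4 A5 A6 B1 B2 B3 B4 B5 B6 ad p
    by (simp add: forall_4 N_def matrix_vector_mult_scaleR mvneg)
qed

definition vec4 :: "real \<Rightarrow> real \<Rightarrow> real \<Rightarrow> real \<Rightarrow> real^4" where
  "vec4 x1 x2 x3 x4 = (\<chi> i. if i = 1 then x1 else if i = 2 then x2 else if i = 3 then x3 else x4)"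
lemma vec4_comp[simp]: "vec4 x1 x2 x3 x4 $ 1 = x1" "vec4 x1 x2 x3 x4 $ 2 = x2"
  "vec4 x1 x2 x3 x4 $ 3 = x3" "vec4 x1 x2 x3 x4 $ 4 = x4"
  by (simp_all add: vec4_def)

lemma vec4_eq: "(x::real^4) = y \<longleftrightarrow> x$1 = y$1 \<and> x$2 = y$2 \<and> x$3 = y$3 \<and> x$4 = y$4"
  by (simp add: vec_eq_iff forall_4)
lemma inner4: "vec4 x1 x2 x3 x4 \<bullet> vec4 y1 y2 y3 y4 = x1*y1 + x2*y2 + x3*y3 + x4*y4"
  by (simp add: inner_vec_def sum_4)
lemma Jv4: "J *v vec4 x1 x2 x3 x4 = vec4 x2 (-x1) x4 (-x3)"
  by (simp add: vec4_eq matrix_vector_mult_def sum_4 Jent)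
lemma Mv4: assumes "skew A" shows "Mof A *v vec4 x1 x2 x3 x4 = vec4
   (A$1$2*x1 - A$2$3*x3 - A$2$4*x4) (A$1$2*x2 + A$1$3*x3 + A$1$4*x4)
   (A$1$4*x1 + A$2$4*x2 + A$3$4*x3) (- A$1$3*x1 - A$2$3*x2 + A$3$4*x4)"
  using skew_facts[OF assms]
  by (simp add: vec4_eq matrix_vector_mult_def matrix_matrix_mult_def sum_4 Jent Mof_def algebra_simps)

lemma exists_vw:
  assumes sk: "skew A" and n1: "A \<noteq> sqrt p *\<^sub>R J" and n2: "A \<noteq> - (sqrt p *\<^sub>R J)"
    and pf: "Pf A = p" and p: "p > 0"
  shows "\<exists>v w. v \<bullet> (J *v w) = 1 \<and> (Mof A *v v) \<bullet> (J *v w) = 0"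
proof -
  note sf = skew_facts[OF sk]
  let ?a = "A$1$2" let ?b = "A$1$3" let ?c = "A$1$4" let ?d = "A$2$3" let ?e = "A$2$4" let ?f = "A$3$4"
  note ss = inner4 Jv4 Mv4[OF sk]
  show ?thesis
  proof (cases "?c \<noteq> 0")
    case True
    show ?thesis
      by (rule exI[of _ "vec4 1 0 0 0"], rule exI[of _ "vec4 0 1 0 (- ?a / ?c)"])
         (use True in \<open>simp add: ss\<close>)
  next
    case c0: False
    show ?thesis
    proof (cases "?b \<noteq> 0")
      case True
      show ?thesis
        by (rule exI[of _ "vec4 1 0 0 0"], rule exI[of _ "vec4 0 1 (- ?a / ?b) 0"])
           (use True c0 in \<open>simp add: ss\<close>)
    next
      case b0: False
      show ?thesis
      proof (cases "?e \<noteq> 0")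
        case True
        show ?thesis
          by (rule exI[of _ "vec4 0 1 0 0"], rule exI[of _ "vec4 (-1) 0 0 (- ?a / ?e)"])
             (use True in \<open>simp add: ss\<close>)
      next
        case e0: False
        show ?thesis
        proof (cases "?d \<noteq> 0")
          case True
          show ?thesis
            by (rule exI[of _ "vec4 0 1 0 0"], rule exI[of _ "vec4 (-1) 0 (- ?a / ?d) 0"])
               (use True e0 in \<open>simp add: ss\<close>)
        next
          case d0: False
          have af: "?a \<noteq> ?f"
          proof
            assume eq: "?a = ?f"
            have AJ: "A = ?a *\<^sub>R J"
              using c0 b0 e0 d0 eq sf by (simp add: mat4_eq forall_4 Jent)
            have "?a * ?a = p" using pf c0 b0 e0 d0 eq by (simp add: Pf_def)
            then have "sqrt p = \<bar>?a\<bar>" using real_sqrt_abs2[of ?a] by simp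
            then have "?a = sqrt p \<or> ?a = - sqrt p" by (auto simp: abs_if)
            then show False using AJ n1 n2 by auto
          qed
          then have fa: "?f - ?a \<noteq> 0" by simp
          show ?thesis
            by (rule exI[of _ "vec4 1 0 1 0"], rule exI[of _ "vec4 0 (?f / (?f - ?a)) 0 (- ?a / (?f - ?a))"])
               (use fa c0 b0 e0 d0 in \<open>simp add: ss divide_simps\<close>)
        qed
      qed
    qed
  qed
qed

lemma to_normal:
  assumes "A \<in> Apq_plus p q" "p > 0"
  shows "\<exists>P \<in> Sp4. rho P A = N p q"
proof -
  from assms(1) have sk: "skew A" and n1: "A \<noteq> sqrt p *\<^sub>R J" and n2: "A \<noteq> - (sqrt p *\<^sub>R J)"
    and pf: "Pf A = p" and sq: "s A = q"
    by (auto simp: Apq_plus_def S4_def)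
  obtain v w where vw: "v \<bullet> (J *v w) = 1" "(Mof A *v v) \<bullet> (J *v w) = 0"
    using exists_vw[OF sk n1 n2 pf assms(2)] by blast
  have "Pf A \<noteq> 0" using pf assms(2) by simp
  from normal[OF sk this vw] show ?thesis using pf sq by blast
qed

lemma Sp4_mult: "X \<in> Sp4 \<Longrightarrow> Y \<in> Sp4 \<Longrightarrow> X ** Y \<in> Sp4"
  unfolding Sp4_def by (simp add: matrix_transpose_mul matrix_mul_assoc)
    (metis matrix_mul_assoc)

lemma Sp4_inv: "Y \<in> Sp4 \<Longrightarrow> Y ** Z = mat 1 \<Longrightarrow> Z \<in> Sp4"
proof -
  assume Y: "Y \<in> Sp4" and YZ: "Y ** Z = mat 1"
  have "transpose Z ** J ** Z = transpose Z ** (transpose Y ** J ** Y) ** Z"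
    using Y by (simp add: Sp4_def)
  also have "\<dots> = transpose (Y ** Z) ** J ** (Y ** Z)"
    by (simp add: matrix_transpose_mul matrix_mul_assoc)
  also have "\<dots> = J" using YZ by simp
  finally show ?thesis by (simp add: Sp4_def)
qed

lemma rho_mult: "rho (X ** Y) A = rho Y (rho X A)"
  unfolding rho_def by (simp add: matrix_transpose_mul matrix_mul_assoc)

lemma Sp4_right_inv: "Y \<in> Sp4 \<Longrightarrow> \<exists>Z. Y ** Z = mat 1"
proof -
  assume Y: "Y \<in> Sp4"
  have JJ: "J ** J = - mat 1"
    by (simp add: mat4_eq forall_4 matrix_matrix_mult_def sum_4 Jent mat_def)
  have negmul: "(- X) ** (W::mat4) = -(X ** W)" for X W :: mat4
    by (simp add: vec_eq_iff matrix_matrix_mult_def sum_negf)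
  have "(- (J ** transpose Y ** J)) ** Y = - (J ** (transpose Y ** J ** Y))"
    by (simp add: negmul matrix_mul_assoc)
  also have "\<dots> = mat 1" using Y JJ by (simp add: Sp4_def)
  finally show ?thesis using matrix_left_right_inverse by blast
qed

theorem lemma4p3:
  fixes p q :: real
  assumes "p > 0"
  shows "\<forall>A \<in> Apq_plus p q. \<forall>B \<in> Apq_plus p q. \<exists>P \<in> Sp4. B = rho P A"
proof (intro ballI)
  fix A B assume A: "A \<in> Apq_plus p q" and B: "B \<in> Apq_plus p q"
  obtain P1 where P1: "P1 \<in> Sp4" "rho P1 A = N p q" using to_normal[OF A assms] by blast
  obtain P2 where P2: "P2 \<in> Sp4" "rho P2 B = N p q" using to_normal[OF B assms] by blast
  obtain Z where Z: "P2 ** Z = mat 1" using Sp4_right_inv[OF P2(1)] by blast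
  have "rho (P1 ** Z) A = rho Z (rho P2 B)" using P1 P2 by (simp add: rho_mult)
  also have "\<dots> = rho (P2 ** Z) B" by (simp add: rho_mult)
  also have "\<dots> = B" using Z by (simp add: rho_def)
  finally have "B = rho (P1 ** Z) A" by simp
  moreover have "P1 ** Z \<in> Sp4" using Sp4_mult[OF P1(1) Sp4_inv[OF P2(1) Z]] .
  ultimately show "\<exists>P \<in> Sp4. B = rho P A" by blast
qed
end
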